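(* Let $L\in\mathbb{R}^{n\times n}$ be the Laplacian of an undirected unweighted graph on $n$ nodes, let $s \in \mathbb{R}^n$ be a mean-zero innate opinion vector and $z = (I+L)^{-1}s$. Let $(u_1,v_1)$ ($u_1\ne v_1$) be a pair of nodes not joined by an edge and $(u_2,v_2)$ an edge of the graph, with edge Laplacians $E_k = \chi_{u_k,v_k}\chi_{u_k,v_k}^T$ and $\delta_k = z(u_k)-z(v_k)$ for $k=1,2$. If $|\delta_2| > \frac{3\sqrt3}{4}\,|\delta_1|$, then $$PD(L+E_1-E_2) > PD(L).$$
   Context: $\chi_{u,v}\in\mathbb{R}^n$ is the vector with $1$ in coordinate $u$, $-1$ in coordinate $v$ and $0$ elsewhere. Friedkin–Johnsen model: expressed opinions $z=(I+L)^{-1}s$. With $s$ fixed, the polarization+disagreement of a graph with Laplacian $M$ is $PD(M) = s^T (I+M)^{-1} s$. *)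

theory Defs
  imports "HOL-Analysis.Analysis"
begin

definition simple_graph :: "('n \<Rightarrow> 'n \<Rightarrow> bool) \<Rightarrow> bool" where
  "simple_graph G \<longleftrightarrow> (\<forall>i j. G i j \<longrightarrow> G j i) \<and> (\<forall>i. \<not> G i i)"

definition laplacian :: "('n::finite \<Rightarrow> 'n \<Rightarrow> bool) \<Rightarrow> real^'n^'n" where
  "laplacian G = (\<chi> i j. if i = j then real (card {k. G i k})
                          else if G i j then -1 else 0)"

definition chi_vec :: "'n::finite \<Rightarrow> 'n \<Rightarrow> real^'n" where
  "chi_vec u v = (\<chi> i. if i = u then 1 else if i = v then -1 else 0)"

definition edge_lap :: "'n::finite \<Rightarrow> 'n \<Rightarrow> real^'n^'n" where
  "edge_lap u v = (\<chi> i j. chi_vec u v $ i * chi_vec u v $ j)"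

definition fj_opinions :: "real^'n^'n \<Rightarrow> real^'n \<Rightarrow> real^'n" where
  "fj_opinions L s = matrix_inv (mat 1 + L) *v s"

definition PD :: "real^'n \<Rightarrow> real^'n^'n \<Rightarrow> real" where
  "PD s M = s \<bullet> (matrix_inv (mat 1 + M) *v s)"

end

theory Submission
  imports Defs
begin

lemma pd_solve:
  fixes M :: "real^'n::finite^'n"
  assumes pd: "\<And>x. x \<bullet> (M *v x) \<ge> x \<bullet> x"
  shows "M *v (matrix_inv M *v s) = s"
proof -
  have "\<forall>x. M *v x = 0 \<longrightarrow> x = 0"
  proof (intro allI impI)
    fix x :: "real^'n" assume "M *v x = 0"
    with pd[of x] have "x \<bullet> x \<le> 0" by simp
    thus "x = 0" by (metis inner_eq_zero_iff inner_ge_zero order_antisym)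
  qed
  then obtain B where "B ** M = mat 1" using matrix_left_invertible_ker by blast
  hence "invertible M" using invertible_left_inverse by blast
  hence "\<exists>A'. M ** A' = mat 1 \<and> A' ** M = mat 1" by (simp add: invertible_def)
  hence "M ** matrix_inv M = mat 1" unfolding matrix_inv_def by (rule someI2_ex) blast
  thus ?thesis by (simp add: matrix_vector_mul_assoc)
qed

lemma inner_sym:
  fixes M :: "real^'n::finite^'n"
  assumes "transpose M = M"
  shows "(M *v y) \<bullet> z = y \<bullet> (M *v z)"
proof -
  have "(M *v y) \<bullet> z = z \<bullet> (M *v y)" by (simp add: inner_commute)
  also have "\<dots> = (z v* M) \<bullet> y" by (simp add: dot_lmul_matrix)
  also have "z v* M = transpose M *v z" by simp
  finally show ?thesis using assms by (simp add: inner_commute)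
qed

lemma chi_axis: "u \<noteq> v \<Longrightarrow> chi_vec u v = axis u 1 - axis v (1::real)"
  by (auto simp: chi_vec_def vec_eq_iff axis_def)

lemma edge_lap_mult: "edge_lap u v *v x = (chi_vec u v \<bullet> x) *\<^sub>R chi_vec u v"
  by (simp add: edge_lap_def matrix_vector_mult_def vec_eq_iff inner_vec_def
      sum_distrib_left sum_distrib_right mult_ac)

lemma edge_quad:
  assumes "u \<noteq> v"
  shows "x \<bullet> (edge_lap u v *v x) = (x $ u - x $ v)^2"
proof -
  have "chi_vec u v \<bullet> x = x $ u - x $ v"
    using assms by (simp add: chi_axis inner_diff_left inner_axis')
  thus ?thesis by (simp add: edge_lap_mult inner_commute power2_eq_square)
qed

lemma edge_lap_sym: "transpose (edge_lap u v) = edge_lap u v"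
  by (simp add: edge_lap_def transpose_def vec_eq_iff mult.commute)

lemma lap_sym: "simple_graph G \<Longrightarrow> transpose (laplacian G) = laplacian G"
  by (auto simp: simple_graph_def laplacian_def transpose_def vec_eq_iff)


lemma transpose_add': "transpose (A + B) = transpose A + (transpose B :: real^'n::finite^'n)"
  by (simp add: transpose_def vec_eq_iff)
lemma transpose_diff': "transpose (A - B) = transpose A - (transpose B :: real^'n::finite^'n)"
  by (simp add: transpose_def vec_eq_iff)

lemma lap_mult:
  assumes "simple_graph G"
  shows "(laplacian G *v x) $ i = (\<Sum>j\<in>UNIV. if G i j then x$i - x$j else 0)"
proof -
  have irr: "\<not> G i i" using assms by (simp add: simple_graph_def)
  have e: "\<And>j. laplacian G $ i $ j * x $ j
      = (if j = i then real (card {k. G i k}) * x$i else 0) + (if G i j then - x$j else 0)"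
    using irr by (auto simp: laplacian_def)
  have "(laplacian G *v x) $ i = (\<Sum>j\<in>UNIV. laplacian G $ i $ j * x $ j)"
    by (simp add: matrix_vector_mult_def)
  also have "\<dots> = real (card {k. G i k}) * x$i + (\<Sum>j\<in>UNIV. if G i j then - x$j else 0)"
    by (simp add: e sum.distrib)
  also have "\<dots> = (\<Sum>j\<in>UNIV. (if G i j then x$i else 0) + (if G i j then - x$j else 0))"
    by (simp add: sum.distrib sum.If_cases)
  also have "\<dots> = (\<Sum>j\<in>UNIV. if G i j then x$i - x$j else 0)"
    by (rule sum.cong) auto
  finally show ?thesis .
qed

lemma lap_quad2:
  assumes "simple_graph G"
  shows "2 * (x \<bullet> (laplacian G *v x)) = (\<Sum>i\<in>UNIV. \<Sum>j\<in>UNIV. if G i j then (x$i - x$j)^2 else 0)"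
proof -
  have sym: "\<And>i j. G i j = G j i" using assms by (auto simp: simple_graph_def)
  define Q where "Q = (\<Sum>i\<in>UNIV. \<Sum>j\<in>UNIV. if G i j then x$i * (x$i - x$j) else 0)"
  have q: "x \<bullet> (laplacian G *v x) = Q"
    unfolding Q_def inner_vec_def using lap_mult[OF assms]
    by (simp add: sum_distrib_left if_distrib cong: if_cong)
  have "Q = (\<Sum>j\<in>UNIV. \<Sum>i\<in>UNIV. if G i j then x$i * (x$i - x$j) else 0)"
    unfolding Q_def by (rule sum.swap)
  also have "\<dots> = (\<Sum>i\<in>UNIV. \<Sum>j\<in>UNIV. if G i j then x$j * (x$j - x$i) else 0)"
    using sym by simp
  finally have "2 * Q = Q + (\<Sum>i\<in>UNIV. \<Sum>j\<in>UNIV. if G i j then x$j * (x$j - x$i) else 0)"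
    by simp
  also have "\<dots> = (\<Sum>i\<in>UNIV. \<Sum>j\<in>UNIV. if G i j then (x$i - x$j)^2 else 0)"
    unfolding Q_def sum.distrib[symmetric]
    by (intro sum.cong refl) (auto simp: power2_eq_square algebra_simps)
  finally show ?thesis using q by simp
qed

lemma lap_quad_bound:
  assumes "simple_graph G" "G u v"
  shows "x \<bullet> (laplacian G *v x) \<ge> (x$u - x$v)^2"
proof -
  have uv: "u \<noteq> v" using assms by (auto simp: simple_graph_def)
  have vu: "G v u" using assms by (auto simp: simple_graph_def)
  define f where "f = (\<lambda>i j. if G i j then (x$i - x$j)^2 else (0::real))"
  define g where "g = (\<lambda>i. \<Sum>j\<in>UNIV. f i j)"
  have fnn: "\<And>i j. f i j \<ge> 0" by (simp add: f_def)
  have gnn: "\<And>i. g i \<ge> 0" by (simp add: g_def sum_nonneg fnn)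
  have "g u + g v = sum g {u, v}" using uv by simp
  also have "\<dots> \<le> sum g UNIV" by (rule sum_mono2) (auto simp: gnn)
  finally have 1: "g u + g v \<le> sum g UNIV" .
  have "f u v \<le> g u" unfolding g_def by (rule member_le_sum) (auto simp: fnn)
  moreover have "f v u \<le> g v" unfolding g_def by (rule member_le_sum) (auto simp: fnn)
  moreover have "f u v = (x$u - x$v)^2" "f v u = (x$u - x$v)^2"
    using assms vu by (auto simp: f_def power2_commute)
  ultimately have "2 * (x$u - x$v)^2 \<le> sum g UNIV" using 1 by linarith
  moreover have "sum g UNIV = 2 * (x \<bullet> (laplacian G *v x))"
    using lap_quad2[OF assms(1)] by (simp add: g_def f_def)
  ultimately show ?thesis by linarith
qed

theorem mainTheorem8:
  fixes G :: "'n::finite \<Rightarrow> 'n \<Rightarrow> bool"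
    and s :: "real^'n"
    and u1 v1 u2 v2 :: 'n
  assumes "simple_graph G"
    and "(\<Sum>i\<in>UNIV. s $ i) = 0"
    and "u1 \<noteq> v1" and "\<not> G u1 v1"
    and "G u2 v2"
    and "\<bar>fj_opinions (laplacian G) s $ u2 - fj_opinions (laplacian G) s $ v2\<bar>
         > 3 * sqrt 3 / 4 * \<bar>fj_opinions (laplacian G) s $ u1 - fj_opinions (laplacian G) s $ v1\<bar>"
  shows "PD s (laplacian G + edge_lap u1 v1 - edge_lap u2 v2) > PD s (laplacian G)"
proof -
  let ?L = "laplacian G"
  let ?E1 = "edge_lap u1 v1"
  let ?E2 = "edge_lap u2 v2"
  define A where "A = mat 1 + ?L"
  define M where "M = mat 1 + (?L + ?E1 - ?E2)"
  have uv2: "u2 \<noteq> v2" using assms(1,5) by (auto simp: simple_graph_def)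
  have Mq: "x \<bullet> (M *v x) = x \<bullet> x + x \<bullet> (?L *v x) + (x$u1 - x$v1)^2 - (x$u2 - x$v2)^2" for x
    using edge_quad[OF assms(3), of x] edge_quad[OF uv2, of x]
    by (simp add: M_def algebra_simps inner_add_right inner_diff_right)
  have Aq: "x \<bullet> (A *v x) = x \<bullet> x + x \<bullet> (?L *v x)" for x
    by (simp add: A_def algebra_simps inner_add_right)
  have Mpd: "x \<bullet> (M *v x) \<ge> x \<bullet> x" for x
    using Mq[of x] lap_quad_bound[OF assms(1,5), of x] by (smt (verit) zero_le_power2)
  have Apd: "x \<bullet> (A *v x) \<ge> x \<bullet> x" for x
    using Aq[of x] lap_quad_bound[OF assms(1,5), of x] by (smt (verit) zero_le_power2)
  have Msym: "transpose M = M"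
    by (simp add: M_def transpose_add' transpose_diff' lap_sym[OF assms(1)] edge_lap_sym)
  define z where "z = matrix_inv A *v s"
  define y where "y = matrix_inv M *v s"
  have Az: "A *v z = s" unfolding z_def by (rule pd_solve[OF Apd])
  have My: "M *v y = s" unfolding y_def by (rule pd_solve[OF Mpd])
  have zdef: "fj_opinions ?L s = z" by (simp add: fj_opinions_def z_def A_def)
  define d1 where "d1 = z$u1 - z$v1"
  define d2 where "d2 = z$u2 - z$v2"
  have hyp: "\<bar>d2\<bar> > 3 * sqrt 3 / 4 * \<bar>d1\<bar>" using assms(6) by (simp add: zdef d1_def d2_def)
  have c: "3 * sqrt 3 / 4 \<ge> (1::real)"
  proof -
    have "sqrt 3 \<ge> sqrt (16/9)" by simp
    moreover have "sqrt (16/9) = (4/3::real)"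
      by (simp add: real_sqrt_divide)
    ultimately show ?thesis by simp
  qed
  have "\<bar>d2\<bar> > \<bar>d1\<bar>"
  proof -
    have "3 * sqrt 3 / 4 * \<bar>d1\<bar> \<ge> \<bar>d1\<bar>" using mult_right_mono[OF c, of "\<bar>d1\<bar>"] by simp
    thus ?thesis using hyp by linarith
  qed
  hence dd: "d2^2 > d1^2" by (metis abs_le_square_iff not_le)
  have "0 \<le> (y - z) \<bullet> (M *v (y - z))"
    using Mpd[of "y - z"] by (smt (verit) inner_ge_zero)
  also have "\<dots> = y \<bullet> (M *v y) - y \<bullet> (M *v z) - z \<bullet> (M *v y) + z \<bullet> (M *v z)"
    by (simp add: algebra_simps inner_diff_left inner_diff_right)
  also have "y \<bullet> (M *v z) = (M *v y) \<bullet> z" using inner_sym[OF Msym] by simp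
  also have "z \<bullet> (M *v z) = z \<bullet> s + d1^2 - d2^2"
    using Mq[of z] Aq[of z] Az by (simp add: d1_def d2_def)
  finally have "0 \<le> y \<bullet> s - s \<bullet> z - z \<bullet> s + (z \<bullet> s + d1^2 - d2^2)" using My by simp
  hence "s \<bullet> y > s \<bullet> z" using dd by (simp add: inner_commute)
  thus ?thesis by (simp add: PD_def y_def z_def M_def A_def)
qed

end
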